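(* Consider the boundary-driven constrained lattice gas on the two-dimensional cylinder $\Lambda = [1,L]\times \mathbb{Z}/L\mathbb{Z}$, with boundary $\partial \Lambda = \{1,L\}\times \mathbb{Z}/L\mathbb{Z}$. Set the left reservoir to $\alpha_\ell$ and the right reservoir to $\alpha_r$, i.e. $\alpha(i)=\alpha_\ell$ if $i\in\{1\}\times\mathbb{Z}/L\mathbb{Z}$ and $\alpha(i)=\alpha_r$ if $i\in\{L\}\times\mathbb{Z}/L\mathbb{Z}$. Then, for every $(i_1,i_2)\in\Lambda$, \[ \rho_a(i_1,i_2) = \alpha_\ell + (\alpha_r-\alpha_\ell)\frac{i_1}{L+1}. \]
   Context: Configurations are $\eta\in\{0,1\}^{\Lambda}$, with $\eta_i=1$ meaning site $i$ is occupied. A particle at $i$ is active if at least one neighbouring site is occupied; set $A_i=\eta_i\,\mathbf 1_{\{\sum_{j'\sim i}\eta_{j'}>0\}}$, where sites outside $\Lambda$ are treated as always occupied ($\eta\equiv1$ on $\Lambda^c$), so boundary particles are always active. The dynamics has generator $\mathscr L=\mathscr L_{bulk}+\mathscr L_{boundary}$ with $\mathscr L_{bulk}f(\eta)=\sum_{i\in\Lambda}\sum_{j\in\Lambda,\,j\sim i}A_i(1-\eta_j)\{f(\eta^{i,j})-f(\eta)\}$ ($\eta^{i,j}$: the particle at $i$ jumps to $j$), and $\mathscr L_{boundary}f(\eta)=\sum_{i\in\partial\Lambda}\big(\alpha(i)f(\eta^{i\leftarrow1})+(1-\alpha(i))f(\eta^{i\leftarrow0})-f(\eta)\big)$ (resampling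 the occupation of boundary site $i$ as a Bernoulli($\alpha(i)$) variable), where $\alpha:\partial\Lambda\to(0,1)$. Let $\pi_\alpha$ be the unique stationary measure and $\rho_a(i)=\mathbb E_{\pi_\alpha}[A_i]$ for $i\in\Lambda$. The paper's theorem shows that $\rho_a$ is discrete-harmonic in $\Lambda$, i.e. $\sum_{j\sim i}(\rho_a(j)-\rho_a(i))=0$ for all $i\in\Lambda$ (sum over neighbours $j$ in $\Lambda$ and in the mirror boundary $\{i\in\mathbb Z^d: d(i,\Lambda)=1\}$), with Dirichlet data $\rho_a(i^* )=\alpha(i)$ at the mirror site $i^*$ adjacent to boundary site $i$; the corollary follows by solving this Dirichlet problem on the cylinder (mirror sites at $i_1=0$ and $i_1=L+1$). *)

theory Defs
  imports Complex_Main
begin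

text \<open>Sites of the cylinder [1,L] x Z/LZ are pairs (i1,i2) with 1 <= i1 <= L and
  0 <= i2 < L (i2 represents a residue class mod L).  A configuration eta in {0,1}^Lambda
  is represented by its set of occupied sites, a subset of the cylinder.\<close>

definition cyl :: "nat \<Rightarrow> (nat \<times> nat) set" where
  "cyl L = {1..L} \<times> {0..<L}"

definition cyl_bdry :: "nat \<Rightarrow> (nat \<times> nat) set" where
  "cyl_bdry L = {1, L} \<times> {0..<L}"

definition cyl_adj :: "nat \<Rightarrow> nat \<times> nat \<Rightarrow> nat \<times> nat \<Rightarrow> bool" where
  "cyl_adj L i j \<longleftrightarrow> i \<noteq> j \<and>
     ((snd i = snd j \<and> (fst j = fst i + 1 \<or> fst i = fst j + 1)) \<or>
      (fst i = fst j \<and> (snd j = (snd i + 1) mod L \<or> snd i = (snd j + 1) mod L)))"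

text \<open>Activity A_i(eta): particle at i with at least one occupied neighbour, where sites
  outside Lambda count as occupied.  A site of the cylinder has a neighbour in Z x Z/LZ
  outside the cylinder exactly when it lies on the boundary {1,L} x Z/LZ.\<close>
definition active :: "nat \<Rightarrow> (nat \<times> nat) set \<Rightarrow> nat \<times> nat \<Rightarrow> real" where
  "active L eta i =
     (if i \<in> eta \<and> (i \<in> cyl_bdry L \<or> (\<exists>j\<in>cyl L. cyl_adj L i j \<and> j \<in> eta)) then 1 else 0)"

definition jump :: "(nat \<times> nat) set \<Rightarrow> nat \<times> nat \<Rightarrow> nat \<times> nat \<Rightarrow> (nat \<times> nat) set" where
  "jump eta i j = insert j (eta - {i})"

definition gen :: "nat \<Rightarrow> (nat \<times> nat \<Rightarrow> real) \<Rightarrow> ((nat \<times> nat) set \<Rightarrow> real)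
                    \<Rightarrow> (nat \<times> nat) set \<Rightarrow> real" where
  "gen L \<alpha> f eta =
     (\<Sum>i\<in>cyl L. \<Sum>j\<in>{j\<in>cyl L. cyl_adj L i j}.
        active L eta i * (if j \<in> eta then 0 else 1) * (f (jump eta i j) - f eta))
   + (\<Sum>i\<in>cyl_bdry L. \<alpha> i * f (insert i eta) + (1 - \<alpha> i) * f (eta - {i}) - f eta)"

definition stationary :: "nat \<Rightarrow> (nat \<times> nat \<Rightarrow> real) \<Rightarrow> ((nat \<times> nat) set \<Rightarrow> real) \<Rightarrow> bool" where
  "stationary L \<alpha> \<pi> \<longleftrightarrow>
     (\<forall>eta\<in>Pow (cyl L). 0 \<le> \<pi> eta) \<and> (\<Sum>eta\<in>Pow (cyl L). \<pi> eta) = 1 \<and>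
     (\<forall>f. (\<Sum>eta\<in>Pow (cyl L). \<pi> eta * gen L \<alpha> f eta) = 0)"

definition rho_a :: "nat \<Rightarrow> ((nat \<times> nat) set \<Rightarrow> real) \<Rightarrow> nat \<times> nat \<Rightarrow> real" where
  "rho_a L \<pi> i = (\<Sum>eta\<in>Pow (cyl L). \<pi> eta * active L eta i)"

definition cyl_alpha :: "nat \<Rightarrow> real \<Rightarrow> real \<Rightarrow> nat \<times> nat \<Rightarrow> real" where
  "cyl_alpha L al ar i = (if fst i = 1 then al else ar)"

end

theory Submission
  imports Defs
begin

definition nbr :: "nat \<Rightarrow> nat \<times> nat \<Rightarrow> (nat \<times> nat) set" where
  "nbr L i = {j \<in> cyl L. cyl_adj L i j}"

lemma adj_sym: "cyl_adj L i j = cyl_adj L j i"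
  by (auto simp: cyl_adj_def)

lemma fin_cyl: "finite (cyl L)" by (simp add: cyl_def)
lemma fin_bdry: "finite (cyl_bdry L)" by (simp add: cyl_bdry_def)
lemma fin_nbr: "finite (nbr L i)" by (simp add: nbr_def fin_cyl)

lemma bulk_term:
  assumes "cyl_adj L a b"
  shows "active L eta a * (if b \<in> eta then 0 else 1) *
          ((if i \<in> jump eta a b then 1 else 0) - (if i \<in> eta then 1 else 0)) =
         (if b = i then active L eta a * (if i \<in> eta then 0 else 1) else 0)
       - (if a = i then active L eta i * (if b \<in> eta then 0 else 1) else 0)"
proof -
  have "a \<noteq> b" using assms by (simp add: cyl_adj_def)
  have act: "active L eta a = 0 \<or> (active L eta a = 1 \<and> a \<in> eta)"
    unfolding active_def by simp
  show ?thesis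
  proof (cases "active L eta a = 0")
    case True
    then show ?thesis by (cases "a = i") simp_all
  next
    case False
    with act have "active L eta a = 1" "a \<in> eta" by auto
    then show ?thesis using \<open>a \<noteq> b\<close>
      by (cases "b \<in> eta"; cases "i = a"; cases "i = b"; simp add: jump_def)
  qed
qed

lemma pair_id:
  assumes "eta \<subseteq> cyl L" "i \<in> cyl L" "a \<in> nbr L i"
  shows "active L eta a * (if i \<in> eta then 0 else 1) - active L eta i * (if a \<in> eta then 0 else 1)
     = active L eta a - active L eta i"
proof -
  have a: "a \<in> cyl L" "cyl_adj L i a" "cyl_adj L a i" using assms(3) adj_sym by (auto simp: nbr_def)
  show ?thesis
    using a assms(2) by (cases "i \<in> eta"; cases "a \<in> eta") (auto simp: active_def)
qed

lemma gen_ind: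
  assumes "eta \<subseteq> cyl L" "i \<in> cyl L"
  shows "gen L \<alpha> (\<lambda>e. if i \<in> e then 1 else 0) eta =
    (\<Sum>a\<in>nbr L i. active L eta a - active L eta i)
    + (if i \<in> cyl_bdry L then \<alpha> i - (if i \<in> eta then 1 else 0) else 0)"
proof -
  let ?h = "\<lambda>a. active L eta a * (if i \<in> eta then 0 else 1)"
  let ?g = "\<lambda>b. active L eta i * (if b \<in> eta then 0 else 1)"
  have "(\<Sum>a\<in>cyl L. \<Sum>b\<in>{j\<in>cyl L. cyl_adj L a j}.
        active L eta a * (if b \<in> eta then 0 else 1) *
          ((if i \<in> jump eta a b then 1 else 0) - (if i \<in> eta then 1 else 0)))
     = (\<Sum>a\<in>cyl L. \<Sum>b\<in>{j\<in>cyl L. cyl_adj L a j}.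
         (if b = i then ?h a else 0) - (if a = i then ?g b else 0))"
    by (intro sum.cong refl) (simp add: bulk_term)
  also have "\<dots> = (\<Sum>a\<in>cyl L. \<Sum>b\<in>{j\<in>cyl L. cyl_adj L a j}. (if b = i then ?h a else 0))
      - (\<Sum>a\<in>cyl L. \<Sum>b\<in>{j\<in>cyl L. cyl_adj L a j}. (if a = i then ?g b else 0))"
    by (simp add: sum_subtractf)
  also have "(\<Sum>a\<in>cyl L. \<Sum>b\<in>{j\<in>cyl L. cyl_adj L a j}. (if b = i then ?h a else 0))
       = (\<Sum>a\<in>cyl L. if cyl_adj L a i then ?h a else 0)"
    using assms(2) by (intro sum.cong refl) (simp add: sum.delta' fin_cyl)
  also have "\<dots> = (\<Sum>a\<in>nbr L i. ?h a)"
    by (simp add: nbr_def sum.inter_filter fin_cyl adj_sym)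
  also have "(\<Sum>a\<in>cyl L. \<Sum>b\<in>{j\<in>cyl L. cyl_adj L a j}. (if a = i then ?g b else 0))
       = (\<Sum>a\<in>cyl L. if a = i then (\<Sum>b\<in>{j\<in>cyl L. cyl_adj L a j}. ?g b) else 0)"
    by (intro sum.cong refl) simp
  also have "\<dots> = (\<Sum>b\<in>nbr L i. ?g b)"
    using assms(2) by (simp add: fin_cyl nbr_def)
  also have "(\<Sum>a\<in>nbr L i. ?h a) - (\<Sum>b\<in>nbr L i. ?g b) = (\<Sum>a\<in>nbr L i. ?h a - ?g a)"
    by (simp add: sum_subtractf)
  also have "\<dots> = (\<Sum>a\<in>nbr L i. active L eta a - active L eta i)"
    by (intro sum.cong refl) (simp add: pair_id assms)
  finally have B: "(\<Sum>a\<in>cyl L. \<Sum>b\<in>{j\<in>cyl L. cyl_adj L a j}.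
        active L eta a * (if b \<in> eta then 0 else 1) *
          ((if i \<in> jump eta a b then 1 else 0) - (if i \<in> eta then 1 else 0)))
     = (\<Sum>a\<in>nbr L i. active L eta a - active L eta i)" .
  have "(\<Sum>k\<in>cyl_bdry L. \<alpha> k * (if i \<in> insert k eta then 1 else 0)
          + (1 - \<alpha> k) * (if i \<in> eta - {k} then 1 else 0) - (if i \<in> eta then 1 else (0::real)))
     = (\<Sum>k\<in>cyl_bdry L. if k = i then \<alpha> i - (if i \<in> eta then 1 else 0) else 0)"
    apply (rule sum.cong[OF refl])
    subgoal for k by (cases "k = i"; cases "i \<in> eta") (simp_all add: algebra_simps)
    done
  also have "\<dots> = (if i \<in> cyl_bdry L then \<alpha> i - (if i \<in> eta then 1 else 0) else 0)"
    by (simp only: sum.delta fin_bdry)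
  finally have C: "(\<Sum>k\<in>cyl_bdry L. \<alpha> k * (if i \<in> insert k eta then 1 else 0)
          + (1 - \<alpha> k) * (if i \<in> eta - {k} then 1 else 0) - (if i \<in> eta then 1 else (0::real)))
     = (if i \<in> cyl_bdry L then \<alpha> i - (if i \<in> eta then 1 else 0) else 0)" .
  show ?thesis unfolding gen_def by (simp only: B C)
qed


lemma harmonic:
  assumes st: "stationary L \<alpha> \<pi>" and i: "i \<in> cyl L"
  shows "(\<Sum>a\<in>nbr L i. rho_a L \<pi> a - rho_a L \<pi> i)
          + (if i \<in> cyl_bdry L then \<alpha> i - rho_a L \<pi> i else 0) = 0"
proof -
  let ?f = "\<lambda>e. if i \<in> e then 1 else (0::real)"
  let ?P = "Pow (cyl L)"
  let ?A = "active L"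
  let ?Bd = "\<lambda>eta. if i \<in> cyl_bdry L then \<alpha> i - (if i \<in> eta then 1 else 0) else (0::real)"
  have fP: "finite ?P" by (simp add: fin_cyl)
  have s1: "(\<Sum>eta\<in>?P. \<pi> eta) = 1" and s0: "(\<Sum>eta\<in>?P. \<pi> eta * gen L \<alpha> ?f eta) = 0"
    using st unfolding stationary_def by auto
  have "(\<Sum>eta\<in>?P. \<pi> eta * gen L \<alpha> ?f eta)
      = (\<Sum>eta\<in>?P. (\<Sum>a\<in>nbr L i. \<pi> eta * ?A eta a - \<pi> eta * ?A eta i) + \<pi> eta * ?Bd eta)"
    apply (rule sum.cong[OF refl])
    apply (subst gen_ind)
    using i by (auto simp: sum_distrib_left right_diff_distrib distrib_left)
  also have "\<dots> = (\<Sum>a\<in>nbr L i. \<Sum>eta\<in>?P. \<pi> eta * ?A eta a - \<pi> eta * ?A eta i)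
       + (\<Sum>eta\<in>?P. \<pi> eta * ?Bd eta)"
    by (simp add: sum.distrib sum.swap[where A = ?P])
  also have "(\<Sum>a\<in>nbr L i. \<Sum>eta\<in>?P. \<pi> eta * ?A eta a - \<pi> eta * ?A eta i)
       = (\<Sum>a\<in>nbr L i. rho_a L \<pi> a - rho_a L \<pi> i)"
    by (simp add: rho_a_def sum_subtractf)
  also have "(\<Sum>eta\<in>?P. \<pi> eta * ?Bd eta) = (if i \<in> cyl_bdry L then \<alpha> i - rho_a L \<pi> i else 0)"
  proof (cases "i \<in> cyl_bdry L")
    case True
    have "(\<Sum>eta\<in>?P. \<pi> eta * ?Bd eta) = (\<Sum>eta\<in>?P. \<alpha> i * \<pi> eta - \<pi> eta * ?A eta i)"
      using True by (intro sum.cong refl) (simp add: active_def algebra_simps)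
    also have "\<dots> = \<alpha> i * (\<Sum>eta\<in>?P. \<pi> eta) - rho_a L \<pi> i"
      by (simp add: sum_subtractf sum_distrib_left rho_a_def)
    finally show ?thesis using True s1 by simp
  qed simp
  finally show ?thesis using s0 by simp
qed

lemma maxprin:
  fixes d :: "nat \<times> nat \<Rightarrow> real"
  assumes eq: "\<forall>i\<in>cyl L. (\<Sum>a\<in>nbr L i. d a - d i) - (if i \<in> cyl_bdry L then d i else 0) = 0"
  shows "\<forall>i\<in>cyl L. d i \<le> 0"
proof (rule ccontr)
  assume "\<not> ?thesis"
  then obtain i0 where i0: "i0 \<in> cyl L" "d i0 > 0" by auto
  define M where "M = Max (d ` cyl L)"
  have fin: "finite (d ` cyl L)" by (simp add: fin_cyl)
  have leM: "\<And>j. j \<in> cyl L \<Longrightarrow> d j \<le> M" unfolding M_def using fin by auto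
  have "M \<in> d ` cyl L" unfolding M_def using fin i0(1) by (intro Max_in) auto
  define S where "S = {j \<in> cyl L. d j = M}"
  have Sne: "S \<noteq> {}" using \<open>M \<in> d ` cyl L\<close> S_def by auto
  have finS: "finite S" unfolding S_def by (simp add: fin_cyl)
  have Mpos: "M > 0" using leM[OF i0(1)] i0(2) by simp
  define m where "m = Min (fst ` S)"
  have "m \<in> fst ` S" unfolding m_def using finS Sne by (intro Min_in) auto
  then obtain i where iS: "i \<in> S" and im: "fst i = m" by auto
  have mmin: "\<And>j. j \<in> S \<Longrightarrow> m \<le> fst j" unfolding m_def using finS by auto
  have icyl: "i \<in> cyl L" and di: "d i = M" using iS S_def by auto
  have terms: "\<And>a. a \<in> nbr L i \<Longrightarrow> d a - d i \<le> 0" using leM di by (auto simp: nbr_def)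
  have sumle: "(\<Sum>a\<in>nbr L i. d a - d i) \<le> 0"
    by (rule sum_nonpos) (use terms in auto)
  have E: "(\<Sum>a\<in>nbr L i. d a - d i) - (if i \<in> cyl_bdry L then d i else 0) = 0"
    using eq icyl by auto
  show False
  proof (cases "m = 1")
    case True
    then have "i \<in> cyl_bdry L" using icyl im by (auto simp: cyl_def cyl_bdry_def)
    then show False using E sumle di Mpos by simp
  next
    case False
    obtain i1 i2 where ip: "i = (i1, i2)" by (cases i)
    have i1: "i1 = m" "1 \<le> i1" "i1 \<le> L" "i2 < L" using im icyl ip by (auto simp: cyl_def)
    define j where "j = (i1 - 1, i2)"
    have jn: "j \<in> nbr L i" using i1 False
      by (auto simp: j_def ip nbr_def cyl_def cyl_adj_def)
    have "j \<notin> S" using mmin[of j] i1 False by (auto simp: j_def)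
    then have dj: "d j < M" using leM[of j] jn by (auto simp: S_def nbr_def)
    have "(\<Sum>a\<in>nbr L i. d a - d i) = (d j - d i) + (\<Sum>a\<in>nbr L i - {j}. d a - d i)"
      using jn fin_nbr by (simp add: sum.remove)
    also have "(\<Sum>a\<in>nbr L i - {j}. d a - d i) \<le> 0"
      by (rule sum_nonpos) (use terms in auto)
    finally have "(\<Sum>a\<in>nbr L i. d a - d i) < 0" using dj di by simp
    then show False using E di Mpos by (simp split: if_splits)
  qed
qed

lemma unique0:
  fixes d :: "nat \<times> nat \<Rightarrow> real"
  assumes eq: "\<forall>i\<in>cyl L. (\<Sum>a\<in>nbr L i. d a - d i) - (if i \<in> cyl_bdry L then d i else 0) = 0"
  shows "\<forall>i\<in>cyl L. d i = 0"
proof -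
  have eq2: "\<forall>i\<in>cyl L. (\<Sum>a\<in>nbr L i. (- d a) - (- d i)) - (if i \<in> cyl_bdry L then - d i else 0) = 0"
  proof
    fix i assume "i \<in> cyl L"
    then have "(\<Sum>a\<in>nbr L i. d a - d i) - (if i \<in> cyl_bdry L then d i else 0) = 0" using eq by auto
    moreover have "(\<Sum>a\<in>nbr L i. (- d a) - (- d i)) = - (\<Sum>a\<in>nbr L i. d a - d i)"
      by (simp add: sum_negf[symmetric])
    ultimately show "(\<Sum>a\<in>nbr L i. (- d a) - (- d i)) - (if i \<in> cyl_bdry L then - d i else 0) = 0"
      by (simp split: if_splits)
  qed
  show ?thesis using maxprin[OF eq] maxprin[OF eq2] by force
qed


lemma nbr_horiz:
  assumes "L \<ge> 2" "(i1, i2) \<in> cyl L"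
  shows "{a \<in> nbr L (i1, i2). fst a \<noteq> i1} =
     (if i1 < L then {(i1 + 1, i2)} else {}) \<union> (if i1 > 1 then {(i1 - 1, i2)} else {})"
  using assms by (auto simp: nbr_def cyl_def cyl_adj_def split: if_splits)

lemma phi_eq:
  fixes al ar c :: real and L :: nat and \<phi> :: "nat \<times> nat \<Rightarrow> real"
  assumes phi: "\<And>a. \<phi> a = al + c * real (fst a)" and c: "c * (real L + 1) = ar - al"
  assumes L: "L \<ge> 2" and i: "(i1, i2) \<in> cyl L"
  shows "(\<Sum>a\<in>nbr L (i1, i2). \<phi> a - \<phi> (i1, i2))
          + (if (i1, i2) \<in> cyl_bdry L then cyl_alpha L al ar (i1, i2) - \<phi> (i1, i2) else 0) = 0"
proof -
  let ?H = "{a \<in> nbr L (i1, i2). fst a \<noteq> i1}"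
  have "(\<Sum>a\<in>nbr L (i1, i2). \<phi> a - \<phi> (i1, i2))
      = (\<Sum>a\<in>nbr L (i1, i2). if fst a \<noteq> i1 then \<phi> a - \<phi> (i1, i2) else 0)"
    by (intro sum.cong refl) (auto simp: phi)
  also have "\<dots> = (\<Sum>a\<in>?H. \<phi> a - \<phi> (i1, i2))"
    by (simp add: sum.inter_filter fin_nbr)
  finally have S: "(\<Sum>a\<in>nbr L (i1, i2). \<phi> a - \<phi> (i1, i2)) = (\<Sum>a\<in>?H. \<phi> a - \<phi> (i1, i2))" .
  have r: "1 \<le> i1" "i1 \<le> L" "i2 < L" using i by (auto simp: cyl_def)
  consider "i1 = 1" | "1 < i1" "i1 < L" | "i1 = L" "1 < i1" using r L by linarith
  then show ?thesis
  proof cases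
    case 1
    then have b: "(i1, i2) \<in> cyl_bdry L" using r by (auto simp: cyl_bdry_def)
    have H: "?H = {(2, i2)}" using nbr_horiz[OF L i] 1 L by simp
    show ?thesis unfolding S H using b 1
      by (simp add: phi cyl_alpha_def algebra_simps)
  next
    case 2
    then have b: "(i1, i2) \<notin> cyl_bdry L" by (auto simp: cyl_bdry_def)
    have H: "?H = {(i1 + 1, i2), (i1 - 1, i2)}" using nbr_horiz[OF L i] 2 by auto
    show ?thesis unfolding S H using b 2
      by (simp add: phi of_nat_diff algebra_simps)
  next
    case 3
    then have b: "(i1, i2) \<in> cyl_bdry L" using r by (auto simp: cyl_bdry_def)
    have H: "?H = {(L - 1, i2)}" using nbr_horiz[OF L i] 3 by simp
    have "cyl_alpha L al ar (i1, i2) = ar" using 3 by (simp add: cyl_alpha_def)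
    then show ?thesis unfolding S H using b 3 L c
      by (simp add: phi of_nat_diff algebra_simps)
  qed
qed

theorem mainTheorem1:
  fixes L :: nat and al ar :: real and \<pi> :: "(nat \<times> nat) set \<Rightarrow> real"
  assumes "L \<ge> 2"
    and "0 < al" and "al < 1" and "0 < ar" and "ar < 1"
    and "stationary L (cyl_alpha L al ar) \<pi>"
  shows "\<forall>i1 i2. (i1, i2) \<in> cyl L \<longrightarrow>
           rho_a L \<pi> (i1, i2) = al + (ar - al) * real i1 / real (L + 1)"
proof -
  define \<phi> where "\<phi> = (\<lambda>i::nat\<times>nat. al + (ar - al) * real (fst i) / real (L + 1))"
  define d where "d = (\<lambda>i. rho_a L \<pi> i - \<phi> i)"
  have eq: "\<forall>i\<in>cyl L. (\<Sum>a\<in>nbr L i. d a - d i) - (if i \<in> cyl_bdry L then d i else 0) = 0"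
  proof
    fix i assume i: "i \<in> cyl L"
    obtain i1 i2 where ip: "i = (i1, i2)" by (cases i)
    have h: "(\<Sum>a\<in>nbr L i. rho_a L \<pi> a - rho_a L \<pi> i)
          + (if i \<in> cyl_bdry L then cyl_alpha L al ar i - rho_a L \<pi> i else 0) = 0"
      by (rule harmonic[OF assms(6) i])
    have p: "(\<Sum>a\<in>nbr L i. \<phi> a - \<phi> i)
          + (if i \<in> cyl_bdry L then cyl_alpha L al ar i - \<phi> i else 0) = 0"
    proof -
      have c: "(ar - al) / real (L + 1) * (real L + 1) = ar - al" by (simp add: field_simps)
      have ph: "\<And>a. \<phi> a = al + (ar - al) / real (L + 1) * real (fst a)"
        unfolding \<phi>_def by simp
      show ?thesis using phi_eq[OF ph c assms(1), of i1 i2] i unfolding ip by simp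
    qed
    have "(\<Sum>a\<in>nbr L i. d a - d i) = (\<Sum>a\<in>nbr L i. rho_a L \<pi> a - rho_a L \<pi> i) - (\<Sum>a\<in>nbr L i. \<phi> a - \<phi> i)"
      unfolding d_def by (simp add: sum_subtractf[symmetric] algebra_simps)
    then show "(\<Sum>a\<in>nbr L i. d a - d i) - (if i \<in> cyl_bdry L then d i else 0) = 0"
      using h p unfolding d_def by (simp split: if_splits)
  qed
  have "\<forall>i\<in>cyl L. d i = 0" by (rule unique0[OF eq])
  then show ?thesis unfolding d_def \<phi>_def by auto
qed

end
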